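(* Let $Y$ be a normed linear space, $F\subset\mathbb R^n$, $x\in F\cap\operatorname{der}F$, $f\colon F\to Y$, and let $L\in\mathcal L(\mathbb R^n,Y)$ be a relative strict derivative of $f$ at $x$ (with respect to $F$). Let $v_1,\dots,v_n\in\operatorname{Ptg}(F,x)$ be unit vectors and $|\det(v_1,\dots,v_n)|>d>0$. Then $$\|L\|_{\mathcal L(\mathbb R^n,Y)}\le\limsup_{\substack{y\to x,\ z\to x\\ y,z\in F,\ y\ne z}}\frac nd\,\frac{\|f(y)-f(z)\|_Y}{|y-z|}.$$
   Context: $\operatorname{der}F$ is the set of accumulation points of $F$. The paratingent cone $\operatorname{Ptg}(F,x)$ is the set of $v\in\mathbb R^n$ for which there are $x_k,y_k\in F$ and $\alpha_k\in\mathbb R$ ($k\in\mathbb N$) with $x_k\to x$, $y_k\to x$ and $\alpha_k(y_k-x_k)\to v$. $L$ is a relative strict derivative of $f$ at $x$ if $x$ is isolated in $F$ or $\|f(y)-f(z)-L(y-z)\|/|y-z|\to0$ as $y,z\to x$, $y,z\in F$, $y\ne z$ (with $y=x$ or $z=x$ allowed). *)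

theory Defs
  imports "HOL-Analysis.Analysis"
begin

definition pair_filter :: "'a::real_normed_vector set \<Rightarrow> 'a \<Rightarrow> ('a \<times> 'a) filter" where
  "pair_filter F x = at (x, x) within {(y, z). y \<in> F \<and> z \<in> F \<and> y \<noteq> z}"

definition Ptg :: "'a::real_normed_vector set \<Rightarrow> 'a \<Rightarrow> 'a set" where
  "Ptg F x = {v. \<exists>xs ys (\<alpha>::nat \<Rightarrow> real).
      (\<forall>k. xs k \<in> F \<and> ys k \<in> F) \<and> xs \<longlonglongrightarrow> x \<and> ys \<longlonglongrightarrow> x \<and>
      (\<lambda>k. \<alpha> k *\<^sub>R (ys k - xs k)) \<longlonglongrightarrow> v}"

definition rel_strict_deriv ::
  "('a::real_normed_vector \<Rightarrow> 'b::real_normed_vector) \<Rightarrow> ('a \<Rightarrow> 'b) \<Rightarrow> 'a set \<Rightarrow> 'a \<Rightarrow> bool" where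
  "rel_strict_deriv f L F x \<longleftrightarrow>
     \<not> x islimpt F \<or>
     ((\<lambda>(y, z). norm (f y - f z - L (y - z)) / norm (y - z)) \<longlongrightarrow> 0) (pair_filter F x)"

end

theory Submission imports Defs begin

lemma det_row_linear:
  fixes A :: "real^'n^'n"
  shows "det (\<chi> i. if i = k then w else A$i) = (\<chi> j. det (\<chi> i. if i = k then axis j 1 else A$i)) \<bullet> w"
proof -
  have "det (\<chi> i. if i = k then w else A$i) =
        det (\<chi> i. if i = k then (\<Sum>j\<in>UNIV. w$j *s axis j 1) else A$i)"
    by (simp only: basis_expansion)
  also have "\<dots> = (\<Sum>j\<in>UNIV. det (\<chi> i. if i = k then w$j *s axis j 1 else A$i))"
    by (rule det_linear_row_sum) simp
  also have "\<dots> = (\<Sum>j\<in>UNIV. w$j * det (\<chi> i. if i = k then axis j 1 else A$i))"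
    by (simp add: det_row_mul)
  also have "\<dots> = (\<chi> j. det (\<chi> i. if i = k then axis j 1 else A$i)) \<bullet> w"
    by (simp add: inner_vec_def mult.commute)
  finally show ?thesis .
qed

lemma continuous_on_det: "continuous_on S (\<lambda>A::real^'n^'n. det A)"
  unfolding det_def by (intro continuous_intros)

lemma compact_rows: "compact {A::real^'n^'n. \<forall>i. norm (A$i) \<le> 1}"
unfolding compact_eq_bounded_closed
proof (rule conjI)
  show "bounded {A::real^'n^'n. \<forall>i. norm (A$i) \<le> 1}"
    unfolding bounded_iff
  proof (intro exI ballI)
    fix A :: "real^'n^'n" assume "A \<in> {A. \<forall>i. norm (A$i) \<le> 1}"
    hence "\<forall>i. norm (A$i) \<le> 1" by simp
    have "norm A \<le> (\<Sum>i\<in>UNIV. norm (A$i))"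
      unfolding norm_vec_def by (rule L2_set_le_sum) simp
    also have "\<dots> \<le> (\<Sum>i\<in>(UNIV::'n set). 1)"
      by (rule sum_mono) (use \<open>\<forall>i. norm (A$i) \<le> 1\<close> in auto)
    finally show "norm A \<le> real CARD('n)" by simp
  qed
  show "closed {A::real^'n^'n. \<forall>i. norm (A$i) \<le> 1}"
    by (intro closed_Collect_all closed_Collect_le continuous_intros)
qed

lemma hadamard_rows:
  fixes B :: "real^'n^'n"
  assumes B: "\<forall>i. norm (B$i) \<le> 1"
  shows "\<bar>det B\<bar> \<le> 1"
proof -
  define K where "K = {A::real^'n^'n. \<forall>i. norm (A$i) \<le> 1}"
  have cK: "compact K" unfolding K_def by (rule compact_rows)
  have I: "(mat 1 :: real^'n^'n) \<in> K"
  proof -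
    have "(mat 1 :: real^'n^'n)$i = axis i 1" for i
      by (simp add: mat_def axis_def vec_eq_iff)
    thus ?thesis unfolding K_def by simp
  qed
  have cont: "continuous_on K (\<lambda>A. \<bar>det A\<bar>)"
    by (intro continuous_intros continuous_on_det)
  obtain A where AK: "A \<in> K" and Amax: "\<forall>y\<in>K. \<bar>det y\<bar> \<le> \<bar>det A\<bar>"
    using continuous_attains_sup[OF cK _ cont] I by blast
  have A1: "1 \<le> \<bar>det A\<bar>" using Amax I by force
  define R where "R k w = (\<chi> i. if i = k then w else A$i)" for k w
  define c where "c k = (\<chi> j. det (\<chi> i. if i = k then axis j 1 else A$i))" for k
  have lin: "det (R k w) = c k \<bullet> w" for k w
    unfolding R_def c_def by (rule det_row_linear)
  have RA: "R k (A$k) = A" for k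
    unfolding R_def by (simp add: vec_eq_iff)
  have orth: "c k \<bullet> A$m = 0" if "m \<noteq> k" for k m
  proof -
    have "det (R k (A$m)) = 0"
      by (rule det_identical_rows[OF that]) (simp add: R_def row_def vec_eq_iff that)
    thus ?thesis using lin by simp
  qed
  have par: "\<exists>t. A$k = t *\<^sub>R c k" and nk: "norm (A$k) = 1" for k
  proof -
    have dA: "\<bar>det A\<bar> = \<bar>c k \<bullet> A$k\<bar>" using lin[of k "A$k"] RA by simp
    have ck: "c k \<noteq> 0" using dA A1 by auto
    define u where "u = (1 / norm (c k)) *\<^sub>R c k"
    have nu: "norm u = 1" using ck by (simp add: u_def)
    have "R k u \<in> K" using AK nu unfolding K_def R_def by auto
    hence "\<bar>c k \<bullet> u\<bar> \<le> \<bar>det A\<bar>" using Amax lin by metis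
    moreover have "c k \<bullet> u = norm (c k)" using ck
      by (simp add: u_def inner_commute power2_norm_eq_inner[symmetric] power2_eq_square)
    ultimately have le1: "norm (c k) \<le> \<bar>c k \<bullet> A$k\<bar>" using dA by simp
    have cs: "\<bar>c k \<bullet> A$k\<bar> \<le> norm (c k) * norm (A$k)" by (rule Cauchy_Schwarz_ineq2)
    have nA: "norm (A$k) \<le> 1" using AK K_def by auto
    have ncpos: "norm (c k) > 0" using ck by simp
    have "norm (c k) * norm (A$k) \<le> norm (c k)" using nA ncpos by simp
    hence eq: "\<bar>c k \<bullet> A$k\<bar> = norm (c k) * norm (A$k)" using le1 cs by linarith
    show "norm (A$k) = 1"
      using le1 cs nA ncpos by (metis dual_order.antisym mult_le_cancel_left1 order_trans)
    from eq[unfolded norm_cauchy_schwarz_abs_eq] ncpos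
    show "\<exists>t. A$k = t *\<^sub>R c k"
    proof (elim disjE)
      assume h: "norm (c k) *\<^sub>R A $ k = norm (A $ k) *\<^sub>R c k"
      show ?thesis
        by (rule exI[of _ "norm (A$k) / norm (c k)"])
           (metis h ncpos less_irrefl scaleR_scaleR divide_inverse mult.commute
             inverse_eq_divide scaleR_right_imp_eq scaleR_one right_inverse)
    next
      assume h: "norm (c k) *\<^sub>R A $ k = - norm (A $ k) *\<^sub>R c k"
      have "A$k = (1/norm (c k)) *\<^sub>R (norm (c k) *\<^sub>R A $ k)" using ncpos by simp
      also have "\<dots> = (- norm (A$k) / norm (c k)) *\<^sub>R c k" using h by simp
      finally show ?thesis by blast
    qed
  qed
  have "orthogonal_matrix A"
    unfolding orthogonal_matrix_orthonormal_rows
  proof (intro conjI allI impI)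
    fix i show "norm (row i A) = 1" using nk[of i] by (simp add: row_def)
  next
    fix i j :: 'n assume ij: "i \<noteq> j"
    obtain t where t: "A$i = t *\<^sub>R c i" using par by blast
    have "A$i \<bullet> A$j = 0" using orth[of j i] ij t by simp
    thus "orthogonal (row i A) (row j A)" by (simp add: row_def orthogonal_def)
  qed
  hence "\<bar>det A\<bar> = 1" using det_orthogonal_matrix by fastforce
  moreover have "B \<in> K" using B K_def by simp
  ultimately show ?thesis using Amax by force
qed

lemma hadamard_one_row:
  fixes v :: "'n \<Rightarrow> real^'n"
  assumes nv: "\<And>i. norm (v i) = 1"
  shows "\<bar>det (\<chi> j. if j = k then u else v j)\<bar> \<le> norm u"
proof -
  define w where "w = (if u = 0 then 0 else (1 / norm u) *\<^sub>R u)"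
  have nw: "norm w \<le> 1" by (simp add: w_def)
  have uw: "u = norm u *s w" by (simp add: w_def scalar_mult_eq_scaleR)
  have "det (\<chi> j. if j = k then u else v j) = det (\<chi> j. if j = k then norm u *s w else v j)"
    using uw by metis
  also have "\<dots> = norm u * det (\<chi> j. if j = k then w else v j)"
    by (rule det_row_mul)
  finally have eq: "det (\<chi> j. if j = k then u else v j) = norm u * det (\<chi> j. if j = k then w else v j)" .
  have "\<bar>det (\<chi> j. if j = k then w else v j)\<bar> \<le> 1"
    by (rule hadamard_rows) (simp add: nw nv)
  hence "norm u * \<bar>det (\<chi> j. if j = k then w else v j)\<bar> \<le> norm u * 1"
    by (intro mult_left_mono) auto
  thus ?thesis using eq by (simp add: abs_mult)
qed

lemma partA:
  fixes F :: "(real ^ 'n) set" and x :: "real ^ 'n"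
    and f :: "real ^ 'n \<Rightarrow> 'b::real_normed_vector"
    and L :: "real ^ 'n \<Rightarrow> 'b"
  assumes lp: "x islimpt F" and lin: "linear L" and rd: "rel_strict_deriv f L F x"
    and vP: "v \<in> Ptg F x" and nv: "norm v = 1" and c: "c \<ge> 0"
  shows "ereal (c * norm (L v)) \<le> Limsup (pair_filter F x)
           (\<lambda>(y, z). ereal (c * (norm (f y - f z) / norm (y - z))))"
proof -
  from vP obtain xs ys and \<alpha> :: "nat \<Rightarrow> real" where
    mem: "\<forall>k. xs k \<in> F \<and> ys k \<in> F" and xl: "xs \<longlonglongrightarrow> x" and yl: "ys \<longlonglongrightarrow> x"
    and al: "(\<lambda>k. \<alpha> k *\<^sub>R (ys k - xs k)) \<longlonglongrightarrow> v"
    unfolding Ptg_def by blast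
  have bl: "bounded_linear L" using lin linear_conv_bounded_linear by blast
  have nl: "(\<lambda>k. norm (\<alpha> k *\<^sub>R (ys k - xs k))) \<longlonglongrightarrow> 1" using tendsto_norm[OF al] nv by simp
  have ev: "eventually (\<lambda>k. norm (\<alpha> k *\<^sub>R (ys k - xs k)) > 1/2) sequentially"
    using order_tendstoD(1)[OF nl, of "1/2"] by simp
  have ev2: "eventually (\<lambda>k. \<alpha> k \<noteq> 0 \<and> ys k \<noteq> xs k) sequentially"
    using ev by eventually_elim auto
  define s where "s k = (ys k, xs k)" for k
  have filt: "filterlim s (pair_filter F x) sequentially"
    unfolding pair_filter_def
  proof (rule filterlim_at_withinI)
    show "filterlim s (nhds (x,x)) sequentially" unfolding s_def by (intro tendsto_Pair yl xl)
    show "eventually (\<lambda>k. s k \<in> {(y, z). y \<in> F \<and> z \<in> F \<and> y \<noteq> z} - {(x,x)}) sequentially"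
      using ev2 by eventually_elim (auto simp: s_def mem)
  qed
  have rd': "((\<lambda>(y, z). norm (f y - f z - L (y - z)) / norm (y - z)) \<longlongrightarrow> 0) (pair_filter F x)"
    using rd lp unfolding rel_strict_deriv_def by blast
  have e: "(\<lambda>k. norm (f (ys k) - f (xs k) - L (ys k - xs k)) / norm (ys k - xs k)) \<longlonglongrightarrow> 0"
    using filterlim_compose[OF rd' filt] by (simp add: s_def)
  have q0: "(\<lambda>k. norm (L (\<alpha> k *\<^sub>R (ys k - xs k))) / norm (\<alpha> k *\<^sub>R (ys k - xs k))) \<longlonglongrightarrow> norm (L v) / 1"
    by (intro tendsto_divide tendsto_norm bounded_linear.tendsto[OF bl] al nl) simp
  have q: "(\<lambda>k. norm (L (ys k - xs k)) / norm (ys k - xs k)) \<longlonglongrightarrow> norm (L v)"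
  proof -
    have "eventually (\<lambda>k. norm (L (\<alpha> k *\<^sub>R (ys k - xs k))) / norm (\<alpha> k *\<^sub>R (ys k - xs k))
            = norm (L (ys k - xs k)) / norm (ys k - xs k)) sequentially"
      using ev2 by eventually_elim (simp add: linear_scale[OF lin])
    thus ?thesis using q0 Lim_transform_eventually by fastforce
  qed
  have r: "(\<lambda>k. norm (f (ys k) - f (xs k)) / norm (ys k - xs k)) \<longlonglongrightarrow> norm (L v)"
  proof -
    have d0: "(\<lambda>k. norm (f (ys k) - f (xs k)) / norm (ys k - xs k) - norm (L (ys k - xs k)) / norm (ys k - xs k)) \<longlonglongrightarrow> 0"
    proof (rule Lim_null_comparison[OF _ e])
      show "eventually (\<lambda>k. norm (norm (f (ys k) - f (xs k)) / norm (ys k - xs k) - norm (L (ys k - xs k)) / norm (ys k - xs k))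
              \<le> norm (f (ys k) - f (xs k) - L (ys k - xs k)) / norm (ys k - xs k)) sequentially"
      proof (rule always_eventually, intro allI)
        fix k
        have "norm (norm (f (ys k) - f (xs k)) / norm (ys k - xs k) - norm (L (ys k - xs k)) / norm (ys k - xs k))
            = \<bar>norm (f (ys k) - f (xs k)) - norm (L (ys k - xs k))\<bar> / norm (ys k - xs k)"
          by (simp add: diff_divide_distrib[symmetric])
        also have "\<dots> \<le> norm (f (ys k) - f (xs k) - L (ys k - xs k)) / norm (ys k - xs k)"
          by (intro divide_right_mono norm_triangle_ineq3) simp
        finally show "norm (norm (f (ys k) - f (xs k)) / norm (ys k - xs k) - norm (L (ys k - xs k)) / norm (ys k - xs k))
              \<le> norm (f (ys k) - f (xs k) - L (ys k - xs k)) / norm (ys k - xs k)" .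
      qed
    qed
    show ?thesis using tendsto_add[OF d0 q] by simp
  qed
  have r2: "(\<lambda>k. ereal (c * (norm (f (ys k) - f (xs k)) / norm (ys k - xs k)))) \<longlonglongrightarrow> ereal (c * norm (L v))"
    unfolding lim_ereal by (intro tendsto_mult tendsto_const r)
  show ?thesis
  proof (rule Limsup_greatest)
    fix P assume P: "eventually P (pair_filter F x)"
    have "eventually (\<lambda>k. P (s k)) sequentially" using filt P by (simp add: filterlim_iff)
    hence "eventually (\<lambda>k. ereal (c * (norm (f (ys k) - f (xs k)) / norm (ys k - xs k)))
            \<le> (SUP p\<in>Collect P. (\<lambda>(y, z). ereal (c * (norm (f y - f z) / norm (y - z)))) p)) sequentially"
    proof eventually_elim
      case (elim k)
      hence "s k \<in> Collect P" by simp
      hence "(\<lambda>(y, z). ereal (c * (norm (f y - f z) / norm (y - z)))) (s k)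
             \<le> (SUP p\<in>Collect P. (\<lambda>(y, z). ereal (c * (norm (f y - f z) / norm (y - z)))) p)"
        by (rule SUP_upper)
      thus ?case by (simp add: s_def)
    qed
    then show "ereal (c * norm (L v)) \<le> (SUP p\<in>Collect P. (\<lambda>(y, z). ereal (c * (norm (f y - f z) / norm (y - z)))) p)"
      using tendsto_upperbound[OF r2] by auto
  qed
qed

theorem lemmaB1:
  fixes F :: "(real ^ 'n) set" and x :: "real ^ 'n"
    and f :: "real ^ 'n \<Rightarrow> 'b::real_normed_vector"
    and L :: "real ^ 'n \<Rightarrow> 'b"
    and v :: "'n \<Rightarrow> real ^ 'n" and d :: real
  assumes "x \<in> F" and "x islimpt F"
    and "linear L"
    and "rel_strict_deriv f L F x"
    and "\<And>i. v i \<in> Ptg F x" and "\<And>i. norm (v i) = 1"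
    and "\<bar>det (\<chi> i j. v j $ i)\<bar> > d" and "d > 0"
  shows "ereal (onorm L) \<le>
    Limsup (pair_filter F x)
      (\<lambda>(y, z). ereal (real CARD('n) / d * (norm (f y - f z) / norm (y - z))))"
proof -
  note lp = assms(2) and lin = assms(3) and rd = assms(4) and vP = assms(5) and nv = assms(6)
    and dd = assms(7) and d0 = assms(8)
  define V where "V = (\<chi> i j. v j $ i)"
  have dV: "det V \<noteq> 0" using dd d0 V_def by auto
  have dV': "\<bar>det V\<bar> > d" using dd V_def by simp
  define g where "g i = norm (L (v i))" for i
  have "Max (range g) \<in> range g" by (rule Max_in) auto
  then obtain m where gm: "g m = Max (range g)" by (metis imageE)
  have mmax: "g i \<le> g m" for i using gm by simp
  define M where "M = g m"
  define K where "K = real CARD('n) / d"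
  have K0: "K \<ge> 0" using d0 by (simp add: K_def)
  have M0: "M \<ge> 0" by (simp add: M_def g_def)
  have bound: "norm (L u) \<le> K * M * norm u" for u
  proof -
    define c where "c = (\<chi> k. det (\<chi> i j. if j = k then u$i else V$i$j) / det V)"
    have Vc: "V *v c = u" using cramer[OF dV, of c u] c_def by simp
    have cb: "\<bar>c$k\<bar> \<le> norm u / d" for k
    proof -
      have tr: "transpose (\<chi> i j. if j = k then u$i else V$i$j) = (\<chi> j. if j = k then u else v j)"
        by (simp add: transpose_def vec_eq_iff V_def)
      have h: "\<bar>det (\<chi> i j. if j = k then u$i else V$i$j)\<bar> \<le> norm u"
        using hadamard_one_row[of v k u, OF nv] det_transpose[of "(\<chi> i j. if j = k then u$i else V$i$j)"] tr
        by metis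
      have "\<bar>c$k\<bar> = \<bar>det (\<chi> i j. if j = k then u$i else V$i$j)\<bar> / \<bar>det V\<bar>"
        by (simp add: c_def abs_divide)
      also have "\<dots> \<le> norm u / \<bar>det V\<bar>" using h dV by (intro divide_right_mono) auto
      also have "\<dots> \<le> norm u / d" using dV' d0 by (intro divide_left_mono) auto
      finally show ?thesis .
    qed
    have "L u = L (\<Sum>j\<in>UNIV. c$j *s column j V)" using Vc by (simp add: matrix_mult_sum)
    also have "\<dots> = (\<Sum>j\<in>UNIV. c$j *\<^sub>R L (v j))"
      by (simp add: linear_sum[OF lin] linear_scale[OF lin] scalar_mult_eq_scaleR column_def V_def)
    finally have Lu: "L u = (\<Sum>j\<in>UNIV. c$j *\<^sub>R L (v j))" .
    have "norm (L u) \<le> (\<Sum>j\<in>UNIV. \<bar>c$j\<bar> * g j)"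
      unfolding Lu g_def by (rule order_trans[OF norm_sum]) simp
    also have "\<dots> \<le> (\<Sum>j\<in>(UNIV::'n set). norm u / d * M)"
      proof (intro sum_mono mult_mono)
        fix j show "\<bar>c$j\<bar> \<le> norm u / d" by (rule cb)
        show "g j \<le> M" unfolding M_def by (rule mmax)
        show "0 \<le> norm u / d" using d0 by simp
        show "0 \<le> g j" by (simp add: g_def)
      qed
    also have "\<dots> = K * M * norm u" by (simp add: K_def)
    finally show ?thesis .
  qed
  have on: "onorm L \<le> K * M"
    by (rule onorm_bound[OF mult_nonneg_nonneg[OF K0 M0] bound])
  have pa: "ereal (K * norm (L (v m))) \<le> Limsup (pair_filter F x)
      (\<lambda>(y, z). ereal (K * (norm (f y - f z) / norm (y - z))))"
    by (rule partA[OF lp lin rd vP[of m] nv[of m] K0])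
  have "ereal (onorm L) \<le> ereal (K * norm (L (v m)))" using on by (simp add: M_def g_def)
  from order_trans[OF this pa] show ?thesis by (simp add: K_def)
qed

end
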